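(* Let $t_\nu\in\mathbb{C}$ be a sequence converging to $0$, and for each $\nu$ let $f_\nu$ be a holomorphic function on (a neighbourhood of) $A_{t_\nu}=\{(z,w)\in\mathbb{C}^2:|z|\le1,|w|\le1,zw=t_\nu\}$. Suppose that $z\mapsto f_\nu(z,t_\nu/z)$ converges uniformly on $\{\tfrac12\le|z|\le1\}$ to a function $F$ holomorphic there, and $w\mapsto f_\nu(t_\nu/w,w)$ converges uniformly on $\{\tfrac12\le|w|\le1\}$ to a function $G$ holomorphic there. Then there exists a holomorphic function $f$ on $A_0=\{(z,w):|z|\le1,|w|\le1,zw=0\}$ (i.e. a continuous function holomorphic on each of the two discs $\{w=0\}$, $\{z=0\}$) with $f(z,0)=F(z)$ for $\tfrac12\le|z|\le1$ and $f(0,w)=G(w)$ for $\tfrac12\le|w|\le1$. Moreover, if $F\equiv0$ and $G\equiv0$, then $\sup_{A_{t_\nu}}|f_\nu|\to0$ as $\nu\to\infty$. *)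

theory Defs
  imports "HOL-Analysis.Analysis"
begin

definition Aset :: "complex \<Rightarrow> (complex \<times> complex) set" where
  "Aset t = {(z, w). norm z \<le> 1 \<and> norm w \<le> 1 \<and> z * w = t}"

definition holomorphic2_on :: "(complex \<times> complex \<Rightarrow> complex) \<Rightarrow> (complex \<times> complex) set \<Rightarrow> bool" where
  "holomorphic2_on f U \<longleftrightarrow>
     (\<forall>p\<in>U. \<exists>L. (f has_derivative L) (at p) \<and> (\<forall>c a b. L (c * a, c * b) = c * L (a, b)))"

definition holomorphic_on_A0 :: "(complex \<times> complex \<Rightarrow> complex) \<Rightarrow> bool" where
  "holomorphic_on_A0 f \<longleftrightarrow> continuous_on (Aset 0) f
     \<and> (\<lambda>z. f (z, 0)) holomorphic_on ball 0 1
     \<and> (\<lambda>w. f (0, w)) holomorphic_on ball 0 1"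

definition half_annulus :: "complex set" where
  "half_annulus = {z. 1/2 \<le> norm z \<and> norm z \<le> 1}"

end

theory Submission
  imports Defs "HOL-Complex_Analysis.Complex_Analysis"
begin


lemma chain_holo:
  assumes L: "(f has_derivative L) (at (z, \<phi> z))" and hom: "\<forall>c a b. L (c * a, c * b) = c * L (a, b)"
    and phi: "(\<phi> has_field_derivative d) (at z)"
  shows "(\<lambda>z. f (z, \<phi> z)) field_differentiable at z"
proof -
  have g: "((\<lambda>z. (z, \<phi> z)) has_derivative (\<lambda>h. (h, d * h))) (at z)"
    using phi by (auto intro!: derivative_eq_intros simp: has_field_derivative_def)
  have "((\<lambda>z. f (z, \<phi> z)) has_derivative (L \<circ> (\<lambda>h. (h, d * h)))) (at z)"
    using diff_chain_at[OF g] L by (simp add: o_def)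
  moreover have "L \<circ> (\<lambda>h. (h, d * h)) = (\<lambda>h. L (1, d) * h)"
  proof
    fix h show "(L \<circ> (\<lambda>h. (h, d * h))) h = L (1, d) * h"
      using hom[rule_format, of h 1 d] by (simp add: mult.commute)
  qed
  ultimately show ?thesis
    unfolding field_differentiable_def has_field_derivative_def by metis
qed



definition ann :: "real \<Rightarrow> complex set" where "ann r = {z. r \<le> norm z \<and> norm z \<le> 1}"

lemma slice_holo:
  assumes U: "open U" "Aset t \<subseteq> U" and hf: "holomorphic2_on f U"
  shows "\<exists>V. open V \<and> ann (norm t) \<subseteq> V \<and> (\<lambda>z. f (z, t/z)) holomorphic_on V \<and> (t \<noteq> 0 \<longrightarrow> 0 \<notin> V)"
proof (cases "t = 0")
  case True
  define V where "V = {z. (z, 0::complex) \<in> U}"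
  have "open V"
  proof -
    have "continuous_on UNIV (\<lambda>z::complex. (z, 0::complex))" by (intro continuous_intros)
    then have "open (UNIV \<inter> (\<lambda>z::complex. (z, 0::complex)) -` U)"
      using continuous_open_preimage U(1) by blast
    then show ?thesis by (simp add: V_def vimage_def)
  qed
  moreover have "ann (norm t) \<subseteq> V"
    using U(2) True by (auto simp: ann_def V_def Aset_def)
  moreover have "(\<lambda>z. f (z, t/z)) holomorphic_on V"
  proof -
    have "(\<lambda>z. f (z, (\<lambda>_. 0) z)) field_differentiable at z" if zV: "z \<in> V" for z
    proof -
      obtain L where "(f has_derivative L) (at (z, 0))" "\<forall>c a b. L (c * a, c * b) = c * L (a, b)"
        using hf zV unfolding holomorphic2_on_def V_def by blast
      then show ?thesis by (intro chain_holo[where d=0]) (auto intro!: derivative_eq_intros)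
    qed
    then show ?thesis using True
      by (simp add: holomorphic_on_def field_differentiable_at_within)
  qed
  ultimately show ?thesis using True by (intro exI[of _ V]) simp
next
  case False
  define V where "V = {z. z \<noteq> 0 \<and> (z, t/z) \<in> U}"
  have "open V"
  proof -
    have "continuous_on (-{0}) (\<lambda>z::complex. (z, t/z))" by (intro continuous_intros) auto
    then have "open ((-{0}) \<inter> (\<lambda>z::complex. (z, t/z)) -` U)"
      using continuous_open_preimage U(1) by blast
    moreover have "(-{0}) \<inter> (\<lambda>z::complex. (z, t/z)) -` U = V" unfolding V_def by blast
    ultimately show ?thesis by simp
  qed
  moreover have "ann (norm t) \<subseteq> V"
  proof
    fix z assume z: "z \<in> ann (norm t)"
    then have "z \<noteq> 0" using False by (auto simp: ann_def)
    moreover have "norm (t/z) \<le> 1" using z \<open>z \<noteq> 0\<close> by (simp add: ann_def norm_divide divide_le_eq_1)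
    ultimately have "(z, t/z) \<in> Aset t" using z by (auto simp: Aset_def ann_def)
    then show "z \<in> V" using U(2) \<open>z \<noteq> 0\<close> by (auto simp: V_def)
  qed
  moreover have "(\<lambda>z. f (z, t/z)) holomorphic_on V"
  proof -
    have "(\<lambda>z. f (z, t/z)) field_differentiable at z" if zV: "z \<in> V" for z
    proof -
      obtain L where "(f has_derivative L) (at (z, t/z))" "\<forall>c a b. L (c * a, c * b) = c * L (a, b)"
        using hf zV unfolding holomorphic2_on_def V_def by blast
      moreover have "z \<noteq> 0" using zV by (auto simp: V_def)
      ultimately show ?thesis
      proof (intro chain_holo[where d="- t / z^2"])
        show "((\<lambda>z. t / z) has_field_derivative - t / z\<^sup>2) (at z)"
          using \<open>z \<noteq> 0\<close> by (auto intro!: derivative_eq_intros simp: power2_eq_square)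
      qed
    qed
    then show ?thesis
      by (simp add: holomorphic_on_def field_differentiable_at_within)
  qed
  moreover have "0 \<notin> V" by (simp add: V_def)
  ultimately show ?thesis by (intro exI[of _ V]) simp
qed

lemma holo2_swap:
  assumes "holomorphic2_on f U"
  shows "holomorphic2_on (\<lambda>p. f (snd p, fst p)) ((\<lambda>p. (snd p, fst p)) -` U)"
  unfolding holomorphic2_on_def
proof
  fix p :: "complex \<times> complex" assume "p \<in> (\<lambda>p. (snd p, fst p)) -` U"
  then obtain L where L: "(f has_derivative L) (at (snd p, fst p))" "\<forall>c a b. L (c * a, c * b) = c * L (a, b)"
    using assms unfolding holomorphic2_on_def by auto
  have s: "((\<lambda>p::complex\<times>complex. (snd p, fst p)) has_derivative (\<lambda>p. (snd p, fst p))) (at p)"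
    by (auto intro!: derivative_eq_intros)
  have "((\<lambda>p. f (snd p, fst p)) has_derivative (L \<circ> (\<lambda>p. (snd p, fst p)))) (at p)"
    using diff_chain_at[OF s] L(1) by (simp add: o_def)
  moreover have "\<forall>c a b. (L \<circ> (\<lambda>p. (snd p, fst p))) (c * a, c * b) = c * (L \<circ> (\<lambda>p. (snd p, fst p))) (a, b)"
    using L(2) by simp
  ultimately show "\<exists>L. ((\<lambda>p. f (snd p, fst p)) has_derivative L) (at p) \<and> (\<forall>c a b. L (c * a, c * b) = c * L (a, b))"
    by blast
qed

lemma open_swap_vimage:
  assumes "open (U :: (complex \<times> complex) set)"
  shows "open ((\<lambda>p. (snd p, fst p)) -` U)"
proof -
  have "continuous_on UNIV (\<lambda>p::complex\<times>complex. (snd p, fst p))" by (intro continuous_intros)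
  then show ?thesis using continuous_open_preimage[OF _ open_UNIV assms] by simp
qed

lemma Aset_swap: "Aset t \<subseteq> U \<Longrightarrow> Aset t \<subseteq> (\<lambda>p. (snd p, fst p)) -` U"
  by (auto simp: Aset_def mult.commute)



lemma hom_circ:
  assumes "0 \<le> a" "a \<le> b" "{z. a \<le> norm z \<and> norm z \<le> b} \<subseteq> S"
  shows "homotopic_loops S (circlepath 0 b) (circlepath 0 a)"
proof (rule homotopic_loops_linear)
  fix s :: real assume s: "s \<in> {0..1}"
  show "closed_segment (circlepath 0 b s) (circlepath 0 a s) \<subseteq> S"
  proof
    fix x assume "x \<in> closed_segment (circlepath 0 b s) (circlepath 0 a s)"
    then obtain u where u: "0 \<le> u" "u \<le> 1" and x: "x = (1 - u) *\<^sub>R circlepath 0 b s + u *\<^sub>R circlepath 0 a s"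
      unfolding closed_segment_def by blast
    define e where "e = exp (2 * of_real pi * \<i> * of_real s)"
    have ne: "norm e = 1" unfolding e_def by (simp add: norm_exp)
    have "x = of_real ((1 - u) * b + u * a) * e"
      unfolding x circlepath e_def by (simp add: scaleR_conv_of_real algebra_simps)
    moreover have c0: "0 \<le> (1 - u) * b + u * a" using assms u by simp
    ultimately have nx: "norm x = (1 - u) * b + u * a"
      by (simp only: norm_mult norm_of_real ne) simp
    have p1: "0 \<le> (1 - u) * (b - a)" and p2: "0 \<le> u * (b - a)" using assms u by simp_all
    have "a \<le> (1 - u) * b + u * a" using p1 by (simp add: algebra_simps)
    moreover have "(1 - u) * b + u * a \<le> b" using p2 by (simp add: algebra_simps)
    ultimately show "x \<in> S" using assms(3) nx by auto
  qed
qed auto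



lemma circlepath_zero: "circlepath 0 0 = linepath 0 0"
  by (simp add: circlepath linepath_def)

lemma cauchy_approx:
  fixes h :: "complex \<Rightarrow> complex" and t :: complex
  assumes V: "open V" "ann (norm t) \<subseteq> V" and hol: "h holomorphic_on V" and t: "norm t \<le> 1/8"
   and Min: "\<And>\<zeta>. t \<noteq> 0 \<Longrightarrow> norm \<zeta> = 2 * norm t \<Longrightarrow> norm (h \<zeta>) \<le> M"
   and Mout: "\<forall>z\<in>half_annulus. norm (h z) \<le> M"
   and z: "1/2 \<le> norm z" "norm z < 1"
  shows "norm (contour_integral (circlepath 0 1) (\<lambda>\<zeta>. h \<zeta> / (\<zeta> - z)) - 2 * pi * \<i> * h z) \<le> 32 * pi * M * norm t"
proof -
  define q where "q = (\<lambda>\<zeta>. if \<zeta> = z then deriv h z else (h \<zeta> - h z) / (\<zeta> - z))"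
  have qh: "q holomorphic_on V" unfolding q_def by (rule pole_lemma_open[OF hol V(1)])
  have zH: "z \<in> half_annulus" using z by (simp add: half_annulus_def)
  have M0: "0 \<le> M" using Mout zH by (meson norm_ge_zero order_trans)
  have sV: "sphere 0 1 \<subseteq> V" using V(2) t by (auto simp: ann_def)
  have hcont: "continuous_on V h" using hol holomorphic_on_imp_continuous_on by blast
  have "continuous_on (sphere 0 1) (\<lambda>\<zeta>. h \<zeta> / (\<zeta> - z))"
    using z by (intro continuous_intros continuous_on_subset[OF hcont sV]) auto
  then have I1: "((\<lambda>\<zeta>. h \<zeta> / (\<zeta> - z)) has_contour_integral
       contour_integral (circlepath 0 1) (\<lambda>\<zeta>. h \<zeta> / (\<zeta> - z))) (circlepath 0 1)"
    by (intro has_contour_integral_integral contour_integrable_continuous_circlepath) simp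
  have I2: "((\<lambda>\<zeta>. h z / (\<zeta> - z)) has_contour_integral (2 * of_real pi * \<i> * h z)) (circlepath 0 1)"
    using Cauchy_integral_circlepath_simple[of "\<lambda>_. h z" 0 1 z] z by simp
  have "(q has_contour_integral (contour_integral (circlepath 0 1) (\<lambda>\<zeta>. h \<zeta> / (\<zeta> - z)) - 2 * of_real pi * \<i> * h z)) (circlepath 0 1)"
  proof (rule has_contour_integral_eq[OF has_contour_integral_diff[OF I1 I2]])
    fix x assume "x \<in> path_image (circlepath 0 1)"
    then have "x \<noteq> z" using z by auto
    then show "h x / (x - z) - h z / (x - z) = q x" by (simp add: q_def diff_divide_distrib)
  qed
  then have q1: "contour_integral (circlepath 0 1) q = contour_integral (circlepath 0 1) (\<lambda>\<zeta>. h \<zeta> / (\<zeta> - z)) - 2 * of_real pi * \<i> * h z"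
    by (rule contour_integral_unique)
  define \<rho> where "\<rho> = 2 * norm t"
  have sub: "{z. \<rho> \<le> norm z \<and> norm z \<le> 1} \<subseteq> V"
  proof (rule subset_trans[OF _ V(2)])
    show "{z. \<rho> \<le> norm z \<and> norm z \<le> 1} \<subseteq> ann (norm t)" by (auto simp: ann_def \<rho>_def) (smt (verit) norm_ge_zero)
  qed
  have hom: "homotopic_loops V (circlepath 0 1) (circlepath 0 \<rho>)"
    by (rule hom_circ[OF _ _ sub]) (use t in \<open>auto simp: \<rho>_def\<close>)
  have q2: "contour_integral (circlepath 0 1) q = contour_integral (circlepath 0 \<rho>) q"
    by (rule Cauchy_theorem_homotopic_loops[OF hom V(1) qh]) auto
  have "norm (contour_integral (circlepath 0 \<rho>) q) \<le> 32 * pi * M * norm t"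
  proof (cases "t = 0")
    case True
    then show ?thesis by (simp add: \<rho>_def circlepath_zero)
  next
    case False
    then have \<rho>0: "0 < \<rho>" by (simp add: \<rho>_def)
    have sV2: "sphere 0 \<rho> \<subseteq> V" using V(2) t by (auto simp: ann_def \<rho>_def)
    have "continuous_on (sphere 0 \<rho>) q"
      using continuous_on_subset[OF holomorphic_on_imp_continuous_on[OF qh] sV2] .
    then have qi: "(q has_contour_integral contour_integral (circlepath 0 \<rho>) q) (circlepath 0 \<rho>)"
      by (intro has_contour_integral_integral contour_integrable_continuous_circlepath) (simp add: abs_of_pos[OF \<rho>0])
    have "norm (contour_integral (circlepath 0 \<rho>) q) \<le> (8 * M) * (2 * pi * \<rho>)"
    proof (rule has_contour_integral_bound_circlepath[OF qi _ \<rho>0])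
      show "0 \<le> 8 * M" using M0 by simp
      fix x :: complex assume "norm (x - 0) = \<rho>"
      then have nx: "norm x = 2 * norm t" by (simp add: \<rho>_def)
      have d: "1/4 \<le> norm (x - z)"
        using norm_triangle_ineq2[of z x] nx t z by (simp add: norm_minus_commute)
      have "x \<noteq> z" using d by auto
      then have "norm (q x) = norm (h x - h z) / norm (x - z)" by (simp add: q_def norm_divide)
      also have "\<dots> \<le> (2 * M) / (1/4)"
      proof (rule frac_le)
        show "norm (h x - h z) \<le> 2 * M"
          using norm_triangle_ineq4[of "h x" "h z"] Min[OF False nx] Mout zH by fastforce
      qed (use M0 d in auto)
      finally show "norm (q x) \<le> 8 * M" by simp
    qed
    then show ?thesis by (simp add: \<rho>_def mult_ac)
  qed
  then show ?thesis using q1 q2 by simp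
qed



lemma const_term:
  fixes f :: "complex \<times> complex \<Rightarrow> complex" and t :: complex
  assumes t0: "t \<noteq> 0" and t1: "norm t \<le> 1" and V: "open V" "ann (norm t) \<subseteq> V" "0 \<notin> V"
    and hol: "(\<lambda>z. f (z, t/z)) holomorphic_on V"
  shows "contour_integral (circlepath 0 1) (\<lambda>\<zeta>. f (\<zeta>, t/\<zeta>) / \<zeta>)
       = contour_integral (circlepath 0 1) (\<lambda>\<omega>. f (t/\<omega>, \<omega>) / \<omega>)"
proof -
  define g where "g = (\<lambda>\<zeta>. f (\<zeta>, t/\<zeta>) / \<zeta>)"
  define \<phi> where "\<phi> = (\<lambda>\<omega>::complex. t / \<omega>)"
  define r where "r = norm t"
  have r0: "0 < r" using t0 by (simp add: r_def)
  have ghol: "g holomorphic_on V" unfolding g_def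
    using V(3) by (intro holomorphic_intros hol) auto
  have "(\<lambda>\<omega>. t / \<omega>) holomorphic_on (-{0})" by (intro holomorphic_intros) auto
  then have phian: "\<phi> analytic_on (-{0})" unfolding \<phi>_def
    by (subst analytic_on_open) auto
  have pim: "path_image (circlepath 0 1) \<subseteq> -{0}" by auto
  have vp: "valid_path (\<phi> \<circ> circlepath 0 1)"
    by (rule valid_path_compose_analytic[OF valid_path_circlepath phian pim])
  have comp: "contour_integral (\<phi> \<circ> circlepath 0 1) g
      = contour_integral (circlepath 0 1) (\<lambda>w. deriv \<phi> w * g (\<phi> w))"
    by (rule contour_integral_comp_analyticW[OF phian valid_path_circlepath pim])
  also have "\<dots> = contour_integral (circlepath 0 1) (\<lambda>\<omega>. - (f (t/\<omega>, \<omega>) / \<omega>))"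
  proof (rule contour_integral_eq)
    fix \<omega> assume "\<omega> \<in> path_image (circlepath 0 1)"
    then have w0: "\<omega> \<noteq> 0" by auto
    have "deriv \<phi> \<omega> = - t / \<omega>^2" unfolding \<phi>_def
      by (rule DERIV_imp_deriv) (use w0 in \<open>auto intro!: derivative_eq_intros simp: power2_eq_square\<close>)
    then show "deriv \<phi> \<omega> * g (\<phi> \<omega>) = - (f (t/\<omega>, \<omega>) / \<omega>)"
      using w0 t0 by (simp add: g_def \<phi>_def power2_eq_square field_simps)
  qed
  also have "\<dots> = - contour_integral (circlepath 0 1) (\<lambda>\<omega>. f (t/\<omega>, \<omega>) / \<omega>)"
    by (rule contour_integral_neg)
  finally have c1: "contour_integral (\<phi> \<circ> circlepath 0 1) g = - contour_integral (circlepath 0 1) (\<lambda>\<omega>. f (t/\<omega>, \<omega>) / \<omega>)" .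
  define \<beta> where "\<beta> = Arg2pi t / (2 * pi)"
  have \<beta>: "0 \<le> \<beta>" "\<beta> \<le> 1" using Arg2pi[of t] by (auto simp: \<beta>_def)
  have teq: "t = of_real r * exp (2 * of_real pi * \<i> * of_real \<beta>)"
    using Arg2pi_eq[of t] by (simp add: r_def \<beta>_def mult_ac)
  have peq: "reversepath (\<phi> \<circ> circlepath 0 1) = shiftpath \<beta> (circlepath 0 r)"
  proof
    fix x :: real
    have e1: "exp (2 * of_real pi * \<i> * of_real (1 - x)) = inverse (exp (2 * of_real pi * \<i> * of_real x))"
      by (simp add: algebra_simps exp_diff exp_two_pi_i' field_simps)
    have lhs: "reversepath (\<phi> \<circ> circlepath 0 1) x = t * exp (2 * of_real pi * \<i> * of_real x)"
      unfolding reversepath_def o_def \<phi>_def circlepath using e1 by (simp add: divide_inverse)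
    have e2: "exp (2 * of_real pi * \<i> * of_real (\<beta> + x - 1)) = exp (2 * of_real pi * \<i> * of_real (\<beta> + x))"
      by (simp add: algebra_simps exp_diff exp_two_pi_i')
    have e3: "exp (2 * of_real pi * \<i> * of_real (\<beta> + x)) = exp (2 * of_real pi * \<i> * of_real \<beta>) * exp (2 * of_real pi * \<i> * of_real x)"
      by (simp add: algebra_simps exp_add[symmetric])
    have rhs: "shiftpath \<beta> (circlepath 0 r) x = t * exp (2 * of_real pi * \<i> * of_real x)"
      unfolding shiftpath_def circlepath using e2 e3 teq by (simp add: mult_ac)
    show "reversepath (\<phi> \<circ> circlepath 0 1) x = shiftpath \<beta> (circlepath 0 r) x"
      using lhs rhs by simp
  qed
  have "contour_integral (circlepath 0 1) g = contour_integral (circlepath 0 r) g"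
  proof (rule Cauchy_theorem_homotopic_loops[OF _ V(1) ghol])
    show "homotopic_loops V (circlepath 0 1) (circlepath 0 r)"
      by (rule hom_circ) (use r0 t1 V(2) in \<open>auto simp: r_def ann_def\<close>)
  qed auto
  also have "\<dots> = contour_integral (shiftpath \<beta> (circlepath 0 r)) g"
    by (rule contour_integral_shiftpath[symmetric]) (use \<beta> in auto)
  also have "\<dots> = contour_integral (reversepath (\<phi> \<circ> circlepath 0 1)) g"
    by (simp add: peq)
  also have "\<dots> = - contour_integral (\<phi> \<circ> circlepath 0 1) g"
    by (rule contour_integral_reversepath[OF vp])
  finally show ?thesis using c1 by (simp add: g_def)
qed



lemma closed_half_annulus: "closed half_annulus"
proof -
  have "half_annulus = cball 0 1 - ball 0 (1/2)" by (auto simp: half_annulus_def)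
  then show ?thesis by (metis closed_Diff closed_cball open_ball)
qed

lemma compact_half_annulus: "compact half_annulus"
proof -
  have "half_annulus \<subseteq> cball 0 1" by (auto simp: half_annulus_def)
  then have "bounded half_annulus" using bounded_cball bounded_subset by blast
  then show ?thesis using closed_half_annulus by (simp add: compact_eq_bounded_closed)
qed

lemma sphere_half_annulus: "sphere 0 1 \<subseteq> half_annulus"
  by (auto simp: half_annulus_def)

lemma cauchy_int_holo:
  assumes "continuous_on (sphere 0 1) F"
  shows "(\<lambda>z. contour_integral (circlepath 0 1) (\<lambda>\<zeta>. F \<zeta> / (\<zeta> - z))) holomorphic_on ball 0 1"
proof -
  have int: "((\<lambda>u. F u / (u - w)^1) has_contour_integral
              contour_integral (circlepath 0 1) (\<lambda>\<zeta>. F \<zeta> / (\<zeta> - w))) (circlepath 0 1)"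
    if "w \<in> ball 0 1" for w
  proof -
    have "continuous_on (sphere 0 1) (\<lambda>u. F u / (u - w))"
      using that assms by (intro continuous_intros) auto
    then show ?thesis
      by (simp, intro has_contour_integral_integral contour_integrable_continuous_circlepath) simp
  qed
  show ?thesis
    unfolding holomorphic_on_def
  proof
    fix w :: complex assume w: "w \<in> ball 0 1"
    have "((\<lambda>z. contour_integral (circlepath 0 1) (\<lambda>\<zeta>. F \<zeta> / (\<zeta> - z))) has_field_derivative
            (of_nat 1 * contour_integral (circlepath 0 1) (\<lambda>u. F u / (u - w) ^ Suc 1))) (at w)"
      by (rule Cauchy_next_derivative_circlepath(2)[OF _ int _ w]) (use assms in auto)
    then show "(\<lambda>z. contour_integral (circlepath 0 1) (\<lambda>\<zeta>. F \<zeta> / (\<zeta> - z))) field_differentiable at w within ball 0 1"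
      using field_differentiable_at_within field_differentiable_def by blast
  qed
qed

lemma circ_lim:
  fixes H :: "nat \<Rightarrow> complex \<Rightarrow> complex"
  assumes ul: "uniform_limit half_annulus H Fl sequentially"
    and ev: "eventually (\<lambda>\<nu>. continuous_on (sphere 0 1) (H \<nu>)) sequentially"
    and cF: "continuous_on half_annulus Fl" and z: "norm z < 1"
  shows "(\<lambda>\<nu>. contour_integral (circlepath 0 1) (\<lambda>\<zeta>. H \<nu> \<zeta> / (\<zeta> - z)))
          \<longlonglongrightarrow> contour_integral (circlepath 0 1) (\<lambda>\<zeta>. Fl \<zeta> / (\<zeta> - z))"
proof (rule contour_integral_uniform_limit_circlepath(2))
  show "\<forall>\<^sub>F n in sequentially. (\<lambda>\<zeta>. H n \<zeta> / (\<zeta> - z)) contour_integrable_on circlepath 0 1"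
    using ev
  proof (rule eventually_mono)
    fix n assume "continuous_on (sphere 0 1) (H n)"
    then have "continuous_on (sphere 0 1) (\<lambda>\<zeta>. H n \<zeta> / (\<zeta> - z))"
      using z by (intro continuous_intros) auto
    then show "(\<lambda>\<zeta>. H n \<zeta> / (\<zeta> - z)) contour_integrable_on circlepath 0 1"
      by (intro contour_integrable_continuous_circlepath) simp
  qed
  have d: "0 < 1 - norm z" using z by simp
  show "uniform_limit (sphere 0 1) (\<lambda>n \<zeta>. H n \<zeta> / (\<zeta> - z)) (\<lambda>\<zeta>. Fl \<zeta> / (\<zeta> - z)) sequentially"
    unfolding uniform_limit_iff
  proof (intro allI impI)
    fix e :: real assume e: "0 < e"
    have "\<forall>\<^sub>F n in sequentially. \<forall>x\<in>half_annulus. dist (H n x) (Fl x) < e * (1 - norm z)"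
      using ul e d by (simp add: uniform_limit_iff)
    then show "\<forall>\<^sub>F n in sequentially. \<forall>x\<in>sphere 0 1. dist (H n x / (x - z)) (Fl x / (x - z)) < e"
    proof (rule eventually_mono)
      fix n assume A: "\<forall>x\<in>half_annulus. dist (H n x) (Fl x) < e * (1 - norm z)"
      show "\<forall>x\<in>sphere 0 1. dist (H n x / (x - z)) (Fl x / (x - z)) < e"
      proof
        fix x :: complex assume x: "x \<in> sphere 0 1"
        have nx: "norm x = 1" using x by simp
        have dz: "1 - norm z \<le> norm (x - z)"
          using norm_triangle_ineq2[of x z] nx by simp
        have "dist (H n x / (x - z)) (Fl x / (x - z)) = norm (H n x - Fl x) / norm (x - z)"
          by (simp add: dist_norm diff_divide_distrib[symmetric] norm_divide)
        also have "\<dots> \<le> norm (H n x - Fl x) / (1 - norm z)"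
          by (rule divide_left_mono) (use dz d in \<open>auto intro!: mult_pos_pos\<close>)
        also have "\<dots> < e"
          using A x sphere_half_annulus d by (auto simp: dist_norm pos_divide_less_eq)
        finally show "dist (H n x / (x - z)) (Fl x / (x - z)) < e" .
      qed
    qed
  qed
qed auto

lemma maxmod_ann:
  fixes h :: "complex \<Rightarrow> complex"
  assumes V: "open V" "ann r \<subseteq> V" and r: "0 \<le> r" "r < 1" and hol: "h holomorphic_on V"
    and B1: "\<And>z. norm z = 1 \<Longrightarrow> norm (h z) \<le> B"
    and Br: "\<And>z. 0 < r \<Longrightarrow> norm z = r \<Longrightarrow> norm (h z) \<le> B"
    and z: "z \<in> ann r"
  shows "norm (h z) \<le> B"
proof (rule maximum_modulus_frontier[where S = "ann r" and f = h and \<xi> = z])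
  have cl: "closed (ann r)"
  proof -
    have "ann r = cball 0 1 - ball 0 r" by (auto simp: ann_def)
    then show ?thesis by (metis closed_Diff closed_cball open_ball)
  qed
  show "h holomorphic_on interior (ann r)"
    using hol V(2) interior_subset holomorphic_on_subset by blast
  show "continuous_on (closure (ann r)) h"
    using cl holomorphic_on_imp_continuous_on[OF holomorphic_on_subset[OF hol V(2)]] by simp
  show "bounded (ann r)"
    by (rule bounded_subset[OF bounded_cball[of 0 1]]) (auto simp: ann_def)
  fix y assume y: "y \<in> frontier (ann r)"
  then have yS: "y \<in> ann r" using cl frontier_subset_closed by blast
  have yI: "y \<notin> interior (ann r)" using y by (simp add: frontier_def)
  have o: "open {z::complex. r < norm z \<and> norm z < 1}"
    by (intro open_Collect_conj open_Collect_less continuous_intros)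
  have "{z::complex. r < norm z \<and> norm z < 1} \<subseteq> ann r" by (auto simp: ann_def)
  then have i1: "{z::complex. r < norm z \<and> norm z < 1} \<subseteq> interior (ann r)"
    using o interior_maximal by blast
  show "norm (h y) \<le> B"
  proof (cases "norm y = 1")
    case True then show ?thesis by (rule B1)
  next
    case False
    then have ny: "norm y < 1" "r \<le> norm y" using yS by (auto simp: ann_def)
    have "norm y = r"
    proof (rule ccontr)
      assume "norm y \<noteq> r"
      then have "y \<in> interior (ann r)" using i1 ny by auto
      then show False using yI by simp
    qed
    moreover have "0 < r"
    proof (rule ccontr)
      assume "\<not> 0 < r"
      then have "r = 0" using r by simp
      then have "ball 0 1 \<subseteq> ann r" by (auto simp: ann_def)
      then have "ball 0 1 \<subseteq> interior (ann r)" using interior_maximal by blast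
      then show False using yI ny by auto
    qed
    ultimately show ?thesis by (intro Br)
  qed
qed (use z in auto)



lemma sphere_ann: "norm (t::complex) \<le> 1 \<Longrightarrow> sphere 0 1 \<subseteq> ann (norm t)"
  by (auto simp: ann_def)

lemma ident_lemma:
  fixes h :: "nat \<Rightarrow> complex \<Rightarrow> complex" and t :: "nat \<Rightarrow> complex"
  assumes t_lim: "t \<longlonglongrightarrow> 0"
    and V: "\<And>\<nu>. open (V \<nu>)" "\<And>\<nu>. ann (norm (t \<nu>)) \<subseteq> V \<nu>" "\<And>\<nu>. h \<nu> holomorphic_on V \<nu>"
    and hlim: "uniform_limit half_annulus h F sequentially" and Fc: "continuous_on half_annulus F"
    and ev: "\<forall>\<^sub>F \<nu> in sequentially. norm (t \<nu>) \<le> 1/8 \<and> (\<forall>z\<in>half_annulus. norm (h \<nu> z) \<le> M)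
               \<and> (\<forall>\<zeta>. t \<nu> \<noteq> 0 \<longrightarrow> norm \<zeta> = 2 * norm (t \<nu>) \<longrightarrow> norm (h \<nu> \<zeta>) \<le> M)"
    and z: "1/2 \<le> norm z" "norm z < 1"
  shows "contour_integral (circlepath 0 1) (\<lambda>\<zeta>. F \<zeta> / (\<zeta> - z)) = 2 * pi * \<i> * F z"
proof -
  have zH: "z \<in> half_annulus" using z by (simp add: half_annulus_def)
  have hcont: "\<forall>\<^sub>F \<nu> in sequentially. continuous_on (sphere 0 1) (h \<nu>)"
    using ev
  proof (rule eventually_mono)
    fix \<nu> assume "norm (t \<nu>) \<le> 1/8 \<and> (\<forall>z\<in>half_annulus. norm (h \<nu> z) \<le> M)
               \<and> (\<forall>\<zeta>. t \<nu> \<noteq> 0 \<longrightarrow> norm \<zeta> = 2 * norm (t \<nu>) \<longrightarrow> norm (h \<nu> \<zeta>) \<le> M)"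
    then have "sphere 0 1 \<subseteq> V \<nu>" using subset_trans[OF sphere_ann V(2)[of \<nu>]] by simp
    then show "continuous_on (sphere 0 1) (h \<nu>)"
      using holomorphic_on_imp_continuous_on[OF V(3)] continuous_on_subset by blast
  qed
  have L1: "(\<lambda>\<nu>. contour_integral (circlepath 0 1) (\<lambda>\<zeta>. h \<nu> \<zeta> / (\<zeta> - z)))
          \<longlonglongrightarrow> contour_integral (circlepath 0 1) (\<lambda>\<zeta>. F \<zeta> / (\<zeta> - z))"
    by (rule circ_lim[OF hlim hcont Fc]) (use z in simp)
  have L2: "(\<lambda>\<nu>. contour_integral (circlepath 0 1) (\<lambda>\<zeta>. h \<nu> \<zeta> / (\<zeta> - z)) - 2 * pi * \<i> * h \<nu> z) \<longlonglongrightarrow> 0"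
  proof (rule Lim_null_comparison)
    show "\<forall>\<^sub>F \<nu> in sequentially. norm (contour_integral (circlepath 0 1) (\<lambda>\<zeta>. h \<nu> \<zeta> / (\<zeta> - z)) - 2 * pi * \<i> * h \<nu> z)
            \<le> 32 * pi * M * norm (t \<nu>)"
      using ev
    proof (rule eventually_mono)
      fix \<nu> assume A: "norm (t \<nu>) \<le> 1/8 \<and> (\<forall>z\<in>half_annulus. norm (h \<nu> z) \<le> M)
               \<and> (\<forall>\<zeta>. t \<nu> \<noteq> 0 \<longrightarrow> norm \<zeta> = 2 * norm (t \<nu>) \<longrightarrow> norm (h \<nu> \<zeta>) \<le> M)"
      show "norm (contour_integral (circlepath 0 1) (\<lambda>\<zeta>. h \<nu> \<zeta> / (\<zeta> - z)) - 2 * pi * \<i> * h \<nu> z)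
            \<le> 32 * pi * M * norm (t \<nu>)"
        by (rule cauchy_approx[OF V(1) V(2) V(3)]) (use A z in auto)
    qed
    have "(\<lambda>\<nu>. norm (t \<nu>)) \<longlonglongrightarrow> 0" using t_lim tendsto_norm_zero by blast
    then show "(\<lambda>\<nu>. 32 * pi * M * norm (t \<nu>)) \<longlonglongrightarrow> 0"
      by (rule tendsto_mult_right_zero)
  qed
  have L3: "(\<lambda>\<nu>. h \<nu> z) \<longlonglongrightarrow> F z" by (rule tendsto_uniform_limitI[OF hlim zH])
  have "(\<lambda>\<nu>. (contour_integral (circlepath 0 1) (\<lambda>\<zeta>. h \<nu> \<zeta> / (\<zeta> - z)) - 2 * pi * \<i> * h \<nu> z) + 2 * pi * \<i> * h \<nu> z)
        \<longlonglongrightarrow> 0 + 2 * pi * \<i> * F z"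
    by (intro tendsto_add L2 tendsto_mult_left L3)
  then have "(\<lambda>\<nu>. contour_integral (circlepath 0 1) (\<lambda>\<zeta>. h \<nu> \<zeta> / (\<zeta> - z))) \<longlonglongrightarrow> 2 * pi * \<i> * F z"
    by simp
  then show ?thesis using L1 LIMSEQ_unique by blast
qed



lemma ext_cont:
  assumes hol: "Ft holomorphic_on ball 0 1" and eq: "\<And>z. 1/2 \<le> norm z \<Longrightarrow> norm z < 1 \<Longrightarrow> Ft z = F z"
    and Fc: "continuous_on half_annulus F"
  shows "continuous_on (cball 0 1) (\<lambda>z. if norm z < 1 then Ft z else F z)"
proof -
  have "cball 0 1 = cball 0 (3/4) \<union> half_annulus" by (auto simp: half_annulus_def)
  moreover have "continuous_on (cball 0 (3/4)) (\<lambda>z. if norm z < 1 then Ft z else F z)"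
  proof (rule continuous_on_eq)
    show "continuous_on (cball 0 (3/4)) Ft"
      by (rule continuous_on_subset[OF holomorphic_on_imp_continuous_on[OF hol]]) auto
  qed auto
  moreover have "continuous_on half_annulus (\<lambda>z. if norm z < 1 then Ft z else F z)"
    by (rule continuous_on_eq[OF Fc]) (auto simp: half_annulus_def eq)
  ultimately show ?thesis
    by (metis continuous_on_closed_Un closed_cball closed_half_annulus)
qed

lemma Aset0_split: "Aset 0 = {p. snd p = 0 \<and> norm (fst p) \<le> 1} \<union> {p. fst p = 0 \<and> norm (snd p) \<le> 1}"
  by (auto simp: Aset_def)

lemma closed_A1: "closed {p::complex\<times>complex. snd p = 0 \<and> norm (fst p) \<le> 1}"
  by (intro closed_Collect_conj closed_Collect_eq closed_Collect_le continuous_intros)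

lemma closed_A2: "closed {p::complex\<times>complex. fst p = 0 \<and> norm (snd p) \<le> 1}"
  by (intro closed_Collect_conj closed_Collect_eq closed_Collect_le continuous_intros)



theorem lemmaA8:
  fixes t :: "nat \<Rightarrow> complex"
    and f :: "nat \<Rightarrow> complex \<times> complex \<Rightarrow> complex"
    and F G :: "complex \<Rightarrow> complex"
  assumes t_lim: "t \<longlonglongrightarrow> 0"
    and f_holo: "\<And>\<nu>. \<exists>U. open U \<and> Aset (t \<nu>) \<subseteq> U \<and> holomorphic2_on (f \<nu>) U"
    and F_lim: "uniform_limit half_annulus (\<lambda>\<nu> z. f \<nu> (z, t \<nu> / z)) F sequentially"
    and G_lim: "uniform_limit half_annulus (\<lambda>\<nu> w. f \<nu> (t \<nu> / w, w)) G sequentially"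
    and F_holo: "F holomorphic_on interior half_annulus" "continuous_on half_annulus F"
    and G_holo: "G holomorphic_on interior half_annulus" "continuous_on half_annulus G"
  shows "(\<exists>g. holomorphic_on_A0 g
              \<and> (\<forall>z\<in>half_annulus. g (z, 0) = F z)
              \<and> (\<forall>w\<in>half_annulus. g (0, w) = G w))
       \<and> ((\<forall>z\<in>half_annulus. F z = 0) \<and> (\<forall>w\<in>half_annulus. G w = 0)
            \<longrightarrow> (\<lambda>\<nu>. Sup ((\<lambda>p. norm (f \<nu> p)) ` Aset (t \<nu>))) \<longlonglongrightarrow> 0)"
proof -
  define h where "h = (\<lambda>\<nu> z. f \<nu> (z, t \<nu> / z))"
  define k where "k = (\<lambda>\<nu> w. f \<nu> (t \<nu> / w, w))"
  have "\<forall>\<nu>. \<exists>U. open U \<and> Aset (t \<nu>) \<subseteq> U \<and> holomorphic2_on (f \<nu>) U" using f_holo by blast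
  then obtain U where U: "\<And>\<nu>. open (U \<nu>)" "\<And>\<nu>. Aset (t \<nu>) \<subseteq> U \<nu>" "\<And>\<nu>. holomorphic2_on (f \<nu>) (U \<nu>)"
    by metis
  have "\<forall>\<nu>. \<exists>V. open V \<and> ann (norm (t \<nu>)) \<subseteq> V \<and> h \<nu> holomorphic_on V \<and> (t \<nu> \<noteq> 0 \<longrightarrow> 0 \<notin> V)"
    unfolding h_def using slice_holo[OF U(1) U(2) U(3)] by blast
  then obtain V where V: "\<And>\<nu>. open (V \<nu>)" "\<And>\<nu>. ann (norm (t \<nu>)) \<subseteq> V \<nu>" "\<And>\<nu>. h \<nu> holomorphic_on V \<nu>"
     "\<And>\<nu>. t \<nu> \<noteq> 0 \<Longrightarrow> 0 \<notin> V \<nu>"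
    by metis
  have "\<forall>\<nu>. \<exists>W. open W \<and> ann (norm (t \<nu>)) \<subseteq> W \<and> k \<nu> holomorphic_on W \<and> (t \<nu> \<noteq> 0 \<longrightarrow> 0 \<notin> W)"
  proof
    fix \<nu>
    show "\<exists>W. open W \<and> ann (norm (t \<nu>)) \<subseteq> W \<and> k \<nu> holomorphic_on W \<and> (t \<nu> \<noteq> 0 \<longrightarrow> 0 \<notin> W)"
      using slice_holo[OF open_swap_vimage[OF U(1)] Aset_swap[OF U(2)] holo2_swap[OF U(3)], of \<nu>]
      by (simp add: k_def)
  qed
  then obtain W where W: "\<And>\<nu>. open (W \<nu>)" "\<And>\<nu>. ann (norm (t \<nu>)) \<subseteq> W \<nu>" "\<And>\<nu>. k \<nu> holomorphic_on W \<nu>"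
     "\<And>\<nu>. t \<nu> \<noteq> 0 \<Longrightarrow> 0 \<notin> W \<nu>"
    by metis
  have hk: "h \<nu> z = k \<nu> (t \<nu> / z)" if "t \<nu> \<noteq> 0" "z \<noteq> 0" for \<nu> z
    using that by (simp add: h_def k_def)
  have kh: "k \<nu> w = h \<nu> (t \<nu> / w)" if "t \<nu> \<noteq> 0" "w \<noteq> 0" for \<nu> w
    using that by (simp add: h_def k_def)
  have hlim: "uniform_limit half_annulus h F sequentially" using F_lim by (simp add: h_def)
  have klim: "uniform_limit half_annulus k G sequentially" using G_lim by (simp add: k_def)
  have tsmall: "\<forall>\<^sub>F \<nu> in sequentially. norm (t \<nu>) \<le> 1/8"
  proof -
    have "(\<lambda>\<nu>. norm (t \<nu>)) \<longlonglongrightarrow> 0" using t_lim tendsto_norm_zero by blast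
    then have "\<forall>\<^sub>F \<nu> in sequentially. norm (t \<nu>) < 1/8" by (rule order_tendstoD) simp
    then show ?thesis by (rule eventually_mono) simp
  qed
  have hcont: "\<forall>\<^sub>F \<nu> in sequentially. continuous_on (sphere 0 1) (h \<nu>)"
    using tsmall
  proof (rule eventually_mono)
    fix \<nu> assume "norm (t \<nu>) \<le> 1/8"
    then have "sphere 0 1 \<subseteq> V \<nu>" using V(2)[of \<nu>] by (auto simp: ann_def)
    then show "continuous_on (sphere 0 1) (h \<nu>)"
      using holomorphic_on_imp_continuous_on[OF V(3)] continuous_on_subset by blast
  qed
  have kcont: "\<forall>\<^sub>F \<nu> in sequentially. continuous_on (sphere 0 1) (k \<nu>)"
    using tsmall
  proof (rule eventually_mono)
    fix \<nu> assume "norm (t \<nu>) \<le> 1/8"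
    then have "sphere 0 1 \<subseteq> W \<nu>" using W(2)[of \<nu>] by (auto simp: ann_def)
    then show "continuous_on (sphere 0 1) (k \<nu>)"
      using holomorphic_on_imp_continuous_on[OF W(3)] continuous_on_subset by blast
  qed

  obtain MF where MF: "\<forall>z\<in>half_annulus. norm (F z) \<le> MF"
    using compact_imp_bounded[OF compact_continuous_image[OF F_holo(2) compact_half_annulus]]
    by (auto simp: bounded_iff)
  obtain MG where MG: "\<forall>z\<in>half_annulus. norm (G z) \<le> MG"
    using compact_imp_bounded[OF compact_continuous_image[OF G_holo(2) compact_half_annulus]]
    by (auto simp: bounded_iff)
  define M where "M = \<bar>MF\<bar> + \<bar>MG\<bar> + 2"
  have hb: "\<forall>\<^sub>F \<nu> in sequentially. \<forall>z\<in>half_annulus. norm (h \<nu> z) \<le> M"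
    using uniform_limitD[OF hlim, of 1]
  proof (rule_tac eventually_mono)
    fix \<nu> assume A: "\<forall>x\<in>half_annulus. dist (h \<nu> x) (F x) < 1"
    show "\<forall>z\<in>half_annulus. norm (h \<nu> z) \<le> M"
    proof
      fix z assume z: "z \<in> half_annulus"
      have "norm (h \<nu> z) \<le> norm (F z) + dist (h \<nu> z) (F z)"
        by (metis dist_norm norm_triangle_sub add.commute)
      then show "norm (h \<nu> z) \<le> M" using A z MF by (force simp: M_def)
    qed
  qed simp
  have kb: "\<forall>\<^sub>F \<nu> in sequentially. \<forall>z\<in>half_annulus. norm (k \<nu> z) \<le> M"
    using uniform_limitD[OF klim, of 1]
  proof (rule_tac eventually_mono)
    fix \<nu> assume A: "\<forall>x\<in>half_annulus. dist (k \<nu> x) (G x) < 1"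
    show "\<forall>z\<in>half_annulus. norm (k \<nu> z) \<le> M"
    proof
      fix z assume z: "z \<in> half_annulus"
      have "norm (k \<nu> z) \<le> norm (G z) + dist (k \<nu> z) (G z)"
        by (metis dist_norm norm_triangle_sub add.commute)
      then show "norm (k \<nu> z) \<le> M" using A z MG by (force simp: M_def)
    qed
  qed simp
  have half: "t / \<zeta> \<in> half_annulus" if "t \<noteq> 0" "norm \<zeta> = 2 * norm t" for t \<zeta> :: complex
    using that by (simp add: half_annulus_def norm_divide)
  have EVh: "\<forall>\<^sub>F \<nu> in sequentially. norm (t \<nu>) \<le> 1/8 \<and> (\<forall>z\<in>half_annulus. norm (h \<nu> z) \<le> M)
               \<and> (\<forall>\<zeta>. t \<nu> \<noteq> 0 \<longrightarrow> norm \<zeta> = 2 * norm (t \<nu>) \<longrightarrow> norm (h \<nu> \<zeta>) \<le> M)"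
    using eventually_conj[OF tsmall eventually_conj[OF hb kb]]
  proof (rule eventually_mono)
    fix \<nu> assume A: "norm (t \<nu>) \<le> 1/8 \<and> (\<forall>z\<in>half_annulus. norm (h \<nu> z) \<le> M) \<and> (\<forall>z\<in>half_annulus. norm (k \<nu> z) \<le> M)"
    have "norm (h \<nu> \<zeta>) \<le> M" if "t \<nu> \<noteq> 0" "norm \<zeta> = 2 * norm (t \<nu>)" for \<zeta>
    proof -
      have "\<zeta> \<noteq> 0" using that by auto
      then have "h \<nu> \<zeta> = k \<nu> (t \<nu> / \<zeta>)" using hk that by blast
      then show ?thesis using A half[OF that] by simp
    qed
    then show "norm (t \<nu>) \<le> 1/8 \<and> (\<forall>z\<in>half_annulus. norm (h \<nu> z) \<le> M)
               \<and> (\<forall>\<zeta>. t \<nu> \<noteq> 0 \<longrightarrow> norm \<zeta> = 2 * norm (t \<nu>) \<longrightarrow> norm (h \<nu> \<zeta>) \<le> M)"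
      using A by blast
  qed
  have EVk: "\<forall>\<^sub>F \<nu> in sequentially. norm (t \<nu>) \<le> 1/8 \<and> (\<forall>z\<in>half_annulus. norm (k \<nu> z) \<le> M)
               \<and> (\<forall>\<zeta>. t \<nu> \<noteq> 0 \<longrightarrow> norm \<zeta> = 2 * norm (t \<nu>) \<longrightarrow> norm (k \<nu> \<zeta>) \<le> M)"
    using eventually_conj[OF tsmall eventually_conj[OF hb kb]]
  proof (rule eventually_mono)
    fix \<nu> assume A: "norm (t \<nu>) \<le> 1/8 \<and> (\<forall>z\<in>half_annulus. norm (h \<nu> z) \<le> M) \<and> (\<forall>z\<in>half_annulus. norm (k \<nu> z) \<le> M)"
    have "norm (k \<nu> \<zeta>) \<le> M" if "t \<nu> \<noteq> 0" "norm \<zeta> = 2 * norm (t \<nu>)" for \<zeta>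
    proof -
      have "\<zeta> \<noteq> 0" using that by auto
      then have "k \<nu> \<zeta> = h \<nu> (t \<nu> / \<zeta>)" using kh that by blast
      then show ?thesis using A half[OF that] by simp
    qed
    then show "norm (t \<nu>) \<le> 1/8 \<and> (\<forall>z\<in>half_annulus. norm (k \<nu> z) \<le> M)
               \<and> (\<forall>\<zeta>. t \<nu> \<noteq> 0 \<longrightarrow> norm \<zeta> = 2 * norm (t \<nu>) \<longrightarrow> norm (k \<nu> \<zeta>) \<le> M)"
      using A by blast
  qed
  have Fid: "contour_integral (circlepath 0 1) (\<lambda>\<zeta>. F \<zeta> / (\<zeta> - z)) = 2 * pi * \<i> * F z"
    if "1/2 \<le> norm z" "norm z < 1" for z
    by (rule ident_lemma[OF t_lim V(1) V(2) V(3) hlim F_holo(2) EVh that])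
  have Gid: "contour_integral (circlepath 0 1) (\<lambda>\<zeta>. G \<zeta> / (\<zeta> - z)) = 2 * pi * \<i> * G z"
    if "1/2 \<le> norm z" "norm z < 1" for z
    by (rule ident_lemma[OF t_lim W(1) W(2) W(3) klim G_holo(2) EVk that])
  define Ft where "Ft = (\<lambda>z. contour_integral (circlepath 0 1) (\<lambda>\<zeta>. F \<zeta> / (\<zeta> - z)) / (2 * pi * \<i>))"
  define Gt where "Gt = (\<lambda>z. contour_integral (circlepath 0 1) (\<lambda>\<zeta>. G \<zeta> / (\<zeta> - z)) / (2 * pi * \<i>))"
  have Ftid: "Ft z = F z" if "1/2 \<le> norm z" "norm z < 1" for z
    using Fid[OF that] by (simp add: Ft_def)
  have Gtid: "Gt z = G z" if "1/2 \<le> norm z" "norm z < 1" for z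
    using Gid[OF that] by (simp add: Gt_def)
  have Fth: "Ft holomorphic_on ball 0 1" unfolding Ft_def
    by (intro holomorphic_intros cauchy_int_holo continuous_on_subset[OF F_holo(2) sphere_half_annulus]) simp
  have Gth: "Gt holomorphic_on ball 0 1" unfolding Gt_def
    by (intro holomorphic_intros cauchy_int_holo continuous_on_subset[OF G_holo(2) sphere_half_annulus]) simp
  have c0: "Ft 0 = Gt 0"
  proof -
    have b: "(\<lambda>\<nu>. contour_integral (circlepath 0 1) (\<lambda>\<zeta>. h \<nu> \<zeta> / (\<zeta> - 0)))
          \<longlonglongrightarrow> contour_integral (circlepath 0 1) (\<lambda>\<zeta>. F \<zeta> / (\<zeta> - 0))"
      by (rule circ_lim[OF hlim hcont F_holo(2)]) simp
    have c: "(\<lambda>\<nu>. contour_integral (circlepath 0 1) (\<lambda>\<zeta>. k \<nu> \<zeta> / (\<zeta> - 0)))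
          \<longlonglongrightarrow> contour_integral (circlepath 0 1) (\<lambda>\<zeta>. G \<zeta> / (\<zeta> - 0))"
      by (rule circ_lim[OF klim kcont G_holo(2)]) simp
    have e: "\<forall>\<^sub>F \<nu> in sequentially. contour_integral (circlepath 0 1) (\<lambda>\<zeta>. k \<nu> \<zeta> / (\<zeta> - 0))
               = contour_integral (circlepath 0 1) (\<lambda>\<zeta>. h \<nu> \<zeta> / (\<zeta> - 0))"
      using tsmall
    proof (rule eventually_mono)
      fix \<nu> assume t8: "norm (t \<nu>) \<le> 1/8"
      show "contour_integral (circlepath 0 1) (\<lambda>\<zeta>. k \<nu> \<zeta> / (\<zeta> - 0))
               = contour_integral (circlepath 0 1) (\<lambda>\<zeta>. h \<nu> \<zeta> / (\<zeta> - 0))"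
      proof (cases "t \<nu> = 0")
        case True
        have cb: "cball 0 1 \<subseteq> ann (norm (t \<nu>))" using True by (auto simp: ann_def)
        have "((\<lambda>u. h \<nu> u / (u - 0)) has_contour_integral (2 * of_real pi * \<i> * h \<nu> 0)) (circlepath 0 1)"
          by (rule Cauchy_integral_circlepath_simple) (use holomorphic_on_subset[OF V(3) subset_trans[OF cb V(2)]] in auto)
        moreover have "((\<lambda>u. k \<nu> u / (u - 0)) has_contour_integral (2 * of_real pi * \<i> * k \<nu> 0)) (circlepath 0 1)"
          by (rule Cauchy_integral_circlepath_simple) (use holomorphic_on_subset[OF W(3) subset_trans[OF cb W(2)]] in auto)
        moreover have "h \<nu> 0 = k \<nu> 0" by (simp add: h_def k_def)
        ultimately show ?thesis using contour_integral_unique by metis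
      next
        case False
        have "contour_integral (circlepath 0 1) (\<lambda>\<zeta>. f \<nu> (\<zeta>, t \<nu> / \<zeta>) / \<zeta>)
            = contour_integral (circlepath 0 1) (\<lambda>\<omega>. f \<nu> (t \<nu> / \<omega>, \<omega>) / \<omega>)"
          by (rule const_term[OF False _ V(1) V(2) V(4)[OF False]]) (use t8 V(3)[of \<nu>] in \<open>auto simp: h_def\<close>)
        then show ?thesis by (simp add: h_def k_def)
      qed
    qed
    have "(\<lambda>\<nu>. contour_integral (circlepath 0 1) (\<lambda>\<zeta>. k \<nu> \<zeta> / (\<zeta> - 0)))
          \<longlonglongrightarrow> contour_integral (circlepath 0 1) (\<lambda>\<zeta>. F \<zeta> / (\<zeta> - 0))"
      by (rule Lim_transform_eventually[OF b]) (use e in \<open>simp add: eq_commute\<close>)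
    then have "contour_integral (circlepath 0 1) (\<lambda>\<zeta>. F \<zeta> / (\<zeta> - 0)) = contour_integral (circlepath 0 1) (\<lambda>\<zeta>. G \<zeta> / (\<zeta> - 0))"
      using c LIMSEQ_unique by blast
    then show ?thesis by (simp add: Ft_def Gt_def)
  qed
  define Fe where "Fe = (\<lambda>z. if norm z < 1 then Ft z else F z)"
  define Ge where "Ge = (\<lambda>z. if norm z < 1 then Gt z else G z)"
  have FeC: "continuous_on (cball 0 1) Fe"
    unfolding Fe_def by (rule ext_cont[OF Fth Ftid F_holo(2)])
  have GeC: "continuous_on (cball 0 1) Ge"
    unfolding Ge_def by (rule ext_cont[OF Gth Gtid G_holo(2)])
  have FeHA: "Fe z = F z" if "z \<in> half_annulus" for z
    using that Ftid by (auto simp: Fe_def half_annulus_def)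
  have GeHA: "Ge z = G z" if "z \<in> half_annulus" for z
    using that Gtid by (auto simp: Ge_def half_annulus_def)
  have Fe0: "Fe 0 = Ge 0" using c0 by (simp add: Fe_def Ge_def)
  define g where "g = (\<lambda>p. if snd p = 0 then Fe (fst p) else Ge (snd p))"
  have part1: "holomorphic_on_A0 g \<and> (\<forall>z\<in>half_annulus. g (z, 0) = F z) \<and> (\<forall>w\<in>half_annulus. g (0, w) = G w)"
  proof (intro conjI ballI)
    show "holomorphic_on_A0 g"
      unfolding holomorphic_on_A0_def
    proof (intro conjI)
      have c1: "continuous_on {p::complex\<times>complex. snd p = 0 \<and> norm (fst p) \<le> 1} g"
      proof (rule continuous_on_eq)
        show "continuous_on {p::complex\<times>complex. snd p = 0 \<and> norm (fst p) \<le> 1} (\<lambda>p. Fe (fst p))"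
          by (rule continuous_on_compose2[OF FeC]) (auto intro!: continuous_intros)
      qed (auto simp: g_def)
      have c2: "continuous_on {p::complex\<times>complex. fst p = 0 \<and> norm (snd p) \<le> 1} g"
      proof (rule continuous_on_eq)
        show "continuous_on {p::complex\<times>complex. fst p = 0 \<and> norm (snd p) \<le> 1} (\<lambda>p. Ge (snd p))"
          by (rule continuous_on_compose2[OF GeC]) (auto intro!: continuous_intros)
      qed (auto simp: g_def Fe0)
      show "continuous_on (Aset 0) g"
        unfolding Aset0_split by (rule continuous_on_closed_Un[OF closed_A1 closed_A2 c1 c2])
      show "(\<lambda>z. g (z, 0)) holomorphic_on ball 0 1"
        by (rule holomorphic_transform[OF Fth]) (auto simp: g_def Fe_def)
      show "(\<lambda>w. g (0, w)) holomorphic_on ball 0 1"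
        by (rule holomorphic_transform[OF Gth]) (use c0 in \<open>auto simp: g_def Ge_def Fe0[symmetric] Fe_def\<close>)
    qed
  next
    fix z assume "z \<in> half_annulus"
    then show "g (z, 0) = F z" by (simp add: g_def FeHA)
  next
    fix w assume w: "w \<in> half_annulus"
    then have "w \<noteq> 0" by (auto simp: half_annulus_def)
    then show "g (0, w) = G w" using w by (simp add: g_def GeHA)
  qed
  have part2: "(\<lambda>\<nu>. Sup ((\<lambda>p. norm (f \<nu> p)) ` Aset (t \<nu>))) \<longlonglongrightarrow> 0"
    if Z: "(\<forall>z\<in>half_annulus. F z = 0) \<and> (\<forall>w\<in>half_annulus. G w = 0)"
    unfolding tendsto_iff
  proof (intro allI impI)
    fix e :: real assume e: "0 < e"
    have e2: "0 < e/2" using e by simp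
    have hs: "\<forall>\<^sub>F \<nu> in sequentially. \<forall>z\<in>half_annulus. norm (h \<nu> z) \<le> e/2"
      using uniform_limitD[OF hlim e2]
      by (rule eventually_mono) (use Z in \<open>auto simp: dist_norm intro: less_imp_le\<close>)
    have ks: "\<forall>\<^sub>F \<nu> in sequentially. \<forall>z\<in>half_annulus. norm (k \<nu> z) \<le> e/2"
      using uniform_limitD[OF klim e2]
      by (rule eventually_mono) (use Z in \<open>auto simp: dist_norm intro: less_imp_le\<close>)
    show "\<forall>\<^sub>F \<nu> in sequentially. dist (Sup ((\<lambda>p. norm (f \<nu> p)) ` Aset (t \<nu>))) 0 < e"
      using eventually_conj[OF tsmall eventually_conj[OF hs ks]]
    proof (rule eventually_mono)
      fix \<nu> assume A: "norm (t \<nu>) \<le> 1/8 \<and> (\<forall>z\<in>half_annulus. norm (h \<nu> z) \<le> e/2) \<and> (\<forall>z\<in>half_annulus. norm (k \<nu> z) \<le> e/2)"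
      have t8: "norm (t \<nu>) \<le> 1/8" using A by blast
      have hB1: "norm (h \<nu> z) \<le> e/2" if "norm z = 1" for z
        using A that by (auto simp: half_annulus_def)
      have kB1: "norm (k \<nu> z) \<le> e/2" if "norm z = 1" for z
        using A that by (auto simp: half_annulus_def)
      have bnd: "norm (f \<nu> p) \<le> e/2" if p: "p \<in> Aset (t \<nu>)" for p
      proof -
        obtain z w where pz: "p = (z, w)" by (cases p)
        have zw: "norm z \<le> 1" "norm w \<le> 1" "z * w = t \<nu>" using p pz by (auto simp: Aset_def)
        show ?thesis
        proof (cases "t \<nu> = 0")
          case False
          have z0: "z \<noteq> 0" using zw False by auto
          have weq: "w = t \<nu> / z" using zw z0 by (auto simp: field_simps)
          have "norm (t \<nu>) \<le> norm z"
            using zw by (metis mult_left_le norm_ge_zero norm_mult)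
          then have zA: "z \<in> ann (norm (t \<nu>))" using zw by (simp add: ann_def)
          have "norm (h \<nu> z) \<le> e/2"
          proof (rule maxmod_ann[OF V(1) V(2) _ _ V(3) hB1 _ zA])
            fix y :: complex assume y: "0 < norm (t \<nu>)" "norm y = norm (t \<nu>)"
            then have y0: "y \<noteq> 0" by auto
            have "t \<nu> / y \<in> half_annulus" using y False by (simp add: half_annulus_def norm_divide)
            then show "norm (h \<nu> y) \<le> e/2" using A hk[OF False y0] by simp
          qed (use t8 in auto)
          then show ?thesis by (simp add: pz weq h_def)
        next
          case True
          then have "z = 0 \<or> w = 0" using zw by simp
          then show ?thesis
          proof
            assume w0: "w = 0"
            have zA: "z \<in> ann (norm (t \<nu>))" using zw True by (simp add: ann_def)
            have "norm (h \<nu> z) \<le> e/2"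
              by (rule maxmod_ann[OF V(1) V(2) _ _ V(3) hB1 _ zA]) (use True in auto)
            then show ?thesis by (simp add: pz w0 h_def True)
          next
            assume z0: "z = 0"
            have wA: "w \<in> ann (norm (t \<nu>))" using zw True by (simp add: ann_def)
            have "norm (k \<nu> w) \<le> e/2"
              by (rule maxmod_ann[OF W(1) W(2) _ _ W(3) kB1 _ wA]) (use True in auto)
            then show ?thesis by (simp add: pz z0 k_def True)
          qed
        qed
      qed
      have aux: "\<And>s::real. 0 \<le> s \<Longrightarrow> s \<le> e/2 \<Longrightarrow> dist s 0 < e" using e by (simp add: dist_real_def)
      have mem: "(t \<nu>, 1) \<in> Aset (t \<nu>)" using t8 by (simp add: Aset_def)
      have bdd: "bdd_above ((\<lambda>p. norm (f \<nu> p)) ` Aset (t \<nu>))"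
        using bnd by (intro bdd_aboveI2[where M="e/2"]) auto
      have "Sup ((\<lambda>p. norm (f \<nu> p)) ` Aset (t \<nu>)) \<le> e/2"
        using bnd mem by (intro cSup_least) auto
      moreover have "norm (f \<nu> (t \<nu>, 1)) \<le> Sup ((\<lambda>p. norm (f \<nu> p)) ` Aset (t \<nu>))"
        using mem bdd by (intro cSup_upper) auto
      moreover have "0 \<le> norm (f \<nu> (t \<nu>, 1))" by simp
      ultimately show "dist (Sup ((\<lambda>p. norm (f \<nu> p)) ` Aset (t \<nu>))) 0 < e"
        using e by (intro aux) linarith+
    qed
  qed
  show ?thesis using part1 part2 by blast
qed


end
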